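(* Let $\mathcal{P}_F$ be a quantitative definite clause specification in $\mathcal{R}(\mathcal{L})$, $\mathcal{L}$ be closed under renaming, $\mathcal{A}$ be a minimal model of $\mathcal{P}_F$, $G$ be a goal of the form $r(\vec{x})\,\&\,\phi$, $\alpha\in[\![\phi]\!]^{\mathcal{A}}_{\mathsf{V}}$ and $\mu(\beta(\vec{x}); r^{\mathcal{A}}) = v$ such that $v>0$ and $\alpha=\beta|_{\mathsf{V}}$. Then there exists a proof tree for $G$ from $\mathcal{P}_F$ with answer constraint $\varphi$ and root value $v$ and $\alpha\in[\![\varphi]\!]^{\mathcal{A}}_{\mathsf{V}}$.
   Context: Setting (quantitative constraint logic programming over the Höhfeld–Smolka CLP scheme). $\mathcal{L}$ is a constraint language with variables $\mathsf{VAR}$, $\mathcal{L}$-constraints, $\mathcal{L}$-interpretations $\mathcal{I}$ with domain $\mathcal{D}$, variable assignments $\mathsf{ASS}$ and solution sets $[\![\phi]\!]^{\mathcal{I}}$; $\mathcal{R}(\mathcal{L})$ extends $\mathcal{L}$ with relation symbols and atoms $r(\vec{x})$. A quantitative definite clause specification $\mathcal{P}_F$ is a finite set of clauses $A \leftarrow_f \phi \,\&\, B_1 \,\&\ldots\&\, B_n$ with $A,B_i$ atoms, $\phi$ an $\mathcal{L}$-constraint, $f\in(0,1]$. An $\mathcal{R}(\mathcal{L})$-interpretation $\mathcal{A}$ extending an $\mathcal{L}$-interpretation $\mathcal{I}$ interprets each $n$-ary relation symbol $r$ by a membership function $\mu(\_\,; r^{\mathcal{A}}):\mathcal{D}^n\to[0,1]$;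 $\mathcal{A}$ is a model of $\mathcal{P}_F$ iff for each $\alpha$ and each clause $r(\vec{x}) \leftarrow_f \phi \,\&\, q_1(\vec{x}_1)\&\ldots\& q_k(\vec{x}_k)$: if $\alpha\in[\![\phi]\!]^{\mathcal{I}}$ then $\mu(\alpha(\vec{x}); r^{\mathcal{A}}) \ge f\times\min\{\mu(\alpha(\vec{x}_j); q_j^{\mathcal{A}})\}$ (with $\min\emptyset=1$). Interpretations extending the same $\mathcal{I}$ are ordered pointwise by their membership functions; a minimal model of $\mathcal{P}_F$ is the least model in this order (it exists and equals the union of the chain $\mathcal{A}_0\subseteq\mathcal{A}_1\subseteq\ldots$ with $\mu(\cdot;r^{\mathcal{A}_0})=0$ and $\mu(\alpha(\vec{x}); r^{\mathcal{A}_{i+1}})=\max\{f\times\min_j \mu(\alpha(\vec{x}_j); q_j^{\mathcal{A}_i})\}$ over clause variants whose constraint $\alpha$ satisfies). $\mathsf{V}$ is the finite set of variables of the query, $\alpha|_{\mathsf{V}}$ the restriction of $\alpha$ to $\mathsf{V}$, and $[\![\phi]\!]^{\mathcal{A}}_{\mathsf{V}}=\{\alpha|_{\mathsf{V}}\mid\alpha\in[\![\phi]\!]^{\mathcal{A}}\}$. $\mathcal{L}$ is closed under renaming if every constraint has a variant under every renaming (bijection on $\mathsf{VAR}$ that is the identity except on finitely many variables). Operational semantics: goal reduction $A\,\&\,G\to F\,\&\,G$ using a variant $A\leftarrow F$ of a clause with $(\mathsf{V}\cup\mathsf{V}(G))\cap\mathsf{V}(F)\subseteq\mathsf{V}(A)$;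 constraint solving $\phi\,\&\,\phi'\,\&\,G\to\phi''\,\&\,G$ with $\phi''$ equivalent to $\phi\,\&\,\phi'$ on $\mathsf{V}\cup\mathsf{V}(G)$. A min/max tree for query $G_1$ has root max-node labeled $G_1$; a max-node's descendants are min-nodes, one per clause $C$ yielding a goal-reduction resolvent $G'$, labeled $C$ and $G'$; a min-node's descendants are max-nodes, one per atom $r(\vec{x})$ of its goal, labeled $r(\vec{x})\,\&\,\phi''$ after constraint solving; terminal max-nodes labeled by satisfiable $\mathcal{L}$-constraints are success nodes (value 1), others failure nodes (value 0); max-node value = maximum of descendant values, min-node value = clause factor $f$ times minimum of descendant values. A proof tree is a subtree containing the root where each max-node keeps one descendant, each min-node keeps all descendants, and all terminal nodes are success nodes whose constraints combine by constraint solving into a satisfiable $\mathcal{L}$-constraint, the answer constraint; the root value is the value of the root. *)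

theory Defs
  imports Complex_Main
begin

text \<open>An interpretation is given by the solution
  sets \<open>sol c\<close> (a set of total variable assignments \<open>'v \<Rightarrow> 'd\<close>);
  \<open>vars c\<close> are the (finitely many) variables of constraint \<open>c\<close>.\<close>

definition constraint_language :: "('c \<Rightarrow> 'v set) \<Rightarrow> ('c \<Rightarrow> ('v \<Rightarrow> 'd) set) \<Rightarrow> bool" where
  "constraint_language vars sol \<longleftrightarrow>
     infinite (UNIV :: 'v set) \<and>
     (\<forall>c. finite (vars c)) \<and>
     (\<forall>c \<alpha> \<beta>. (\<forall>x\<in>vars c. \<alpha> x = \<beta> x) \<longrightarrow> (\<alpha> \<in> sol c \<longleftrightarrow> \<beta> \<in> sol c))"

definition renaming :: "('v \<Rightarrow> 'v) \<Rightarrow> bool" where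
  "renaming \<rho> \<longleftrightarrow> bij \<rho> \<and> finite {x. \<rho> x \<noteq> x}"

definition cvariant :: "('c \<Rightarrow> 'v set) \<Rightarrow> ('c \<Rightarrow> ('v \<Rightarrow> 'd) set) \<Rightarrow> ('v \<Rightarrow> 'v) \<Rightarrow> 'c \<Rightarrow> 'c \<Rightarrow> bool" where
  "cvariant vars sol \<rho> c c' \<longleftrightarrow> vars c' = \<rho> ` vars c \<and> sol c' = {\<alpha>. \<alpha> \<circ> \<rho> \<in> sol c}"

definition closed_under_renaming :: "('c \<Rightarrow> 'v set) \<Rightarrow> ('c \<Rightarrow> ('v \<Rightarrow> 'd) set) \<Rightarrow> bool" where
  "closed_under_renaming vars sol \<longleftrightarrow> (\<forall>c \<rho>. renaming \<rho> \<longrightarrow> (\<exists>c'. cvariant vars sol \<rho> c c'))"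

text \<open>Conjunctions of \<open>L\<close>-constraints (as they occur in goals, written \<open>\<phi> & \<phi>'\<close>) are
  represented by lists of constraints.\<close>
definition cvars :: "('c \<Rightarrow> 'v set) \<Rightarrow> 'c list \<Rightarrow> 'v set" where
  "cvars vars cs = (\<Union>c\<in>set cs. vars c)"

definition csol :: "('c \<Rightarrow> ('v \<Rightarrow> 'd) set) \<Rightarrow> 'c list \<Rightarrow> ('v \<Rightarrow> 'd) set" where
  "csol sol cs = {\<alpha>. \<forall>c\<in>set cs. \<alpha> \<in> sol c}"

definition restr :: "'v set \<Rightarrow> ('v \<Rightarrow> 'd) \<Rightarrow> ('v \<rightharpoonup> 'd)" where
  "restr V \<alpha> = (Some \<circ> \<alpha>) |` V"

definition solV :: "('c \<Rightarrow> ('v \<Rightarrow> 'd) set) \<Rightarrow> 'v set \<Rightarrow> 'c list \<Rightarrow> ('v \<rightharpoonup> 'd) set" where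
  "solV sol V cs = restr V ` csol sol cs"

text \<open>Atoms \<open>r(x\<^sub>1,\<dots>,x\<^sub>n)\<close> (pairwise distinct variables) and quantitative clauses
  \<open>r(x) \<leftarrow>\<^sub>f \<phi> & B\<^sub>1 & \<dots> & B\<^sub>k\<close>, represented as (head, factor, constraint, body atoms).\<close>
type_synonym ('r,'v) atom = "'r \<times> 'v list"
type_synonym ('r,'v,'c) qclause = "('r,'v) atom \<times> real \<times> 'c \<times> ('r,'v) atom list"

definition atom_wf :: "('r,'v) atom \<Rightarrow> bool" where
  "atom_wf A \<longleftrightarrow> distinct (snd A)"

definition avars :: "('r,'v) atom \<Rightarrow> 'v set" where
  "avars A = set (snd A)"

definition qspec :: "('r,'v,'c) qclause set \<Rightarrow> bool" where
  "qspec P \<longleftrightarrow> finite P \<and>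
     (\<forall>(A, f, c, B) \<in> P. atom_wf A \<and> 0 < f \<and> f \<le> 1 \<and> (\<forall>Bj\<in>set B. atom_wf Bj))"

definition minl :: "real list \<Rightarrow> real" where
  "minl xs = (if xs = [] then 1 else Min (set xs))"

definition is_qmodel :: "('c \<Rightarrow> ('v \<Rightarrow> 'd) set) \<Rightarrow> ('r,'v,'c) qclause set \<Rightarrow> ('r \<Rightarrow> 'd list \<Rightarrow> real) \<Rightarrow> bool" where
  "is_qmodel sol P \<mu> \<longleftrightarrow>
     (\<forall>r ds. 0 \<le> \<mu> r ds \<and> \<mu> r ds \<le> 1) \<and>
     (\<forall>((r, xs), f, c, B) \<in> P. \<forall>\<alpha>. \<alpha> \<in> sol c \<longrightarrow>
        \<mu> r (map \<alpha> xs) \<ge> f * minl (map (\<lambda>(q, ys). \<mu> q (map \<alpha> ys)) B))"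

definition minimal_qmodel :: "('c \<Rightarrow> ('v \<Rightarrow> 'd) set) \<Rightarrow> ('r,'v,'c) qclause set \<Rightarrow> ('r \<Rightarrow> 'd list \<Rightarrow> real) \<Rightarrow> bool" where
  "minimal_qmodel sol P \<mu> \<longleftrightarrow> is_qmodel sol P \<mu> \<and>
     (\<forall>\<mu>'. is_qmodel sol P \<mu>' \<longrightarrow> (\<forall>r ds. \<mu> r ds \<le> \<mu>' r ds))"

text \<open>Proof trees.  \<open>ptree vars sol P V A \<phi> leaves val\<close>: there is a proof tree (subtree of the
  min/max tree) whose root is the max-node labelled \<open>A & \<phi>\<close>, where \<open>V\<close> are the variables of
  the original query; \<open>leaves\<close> is the conjunction of the constraints of its (success)
  terminal nodes and \<open>val\<close> its root value.  The max-node keeps one min-node descendant,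
  given by goal reduction with a variant \<open>A \<leftarrow> \<phi>' & B\<^sub>1' & ... & B\<^sub>k'\<close> of a clause,
  subject to \<open>(V \<union> V(\<phi>)) \<inter> V(F) \<subseteq> V(A)\<close>; the min-node keeps all its descendants: one max-node
  \<open>B\<^sub>j' & \<phi>\<^sub>j\<close> per body atom, where \<open>\<phi>\<^sub>j\<close> results from constraint solving, i.e. is equivalent to
  \<open>\<phi>' & \<phi>\<close> on \<open>V \<union> V(B\<^sub>j')\<close>; if \<open>k = 0\<close> the single descendant is the terminal max-node labelled
  by the constraint \<open>\<psi>\<close> obtained by constraint solving, which must be satisfiable (success node,
  value 1).\<close>
inductive ptree :: "('c \<Rightarrow> 'v set) \<Rightarrow> ('c \<Rightarrow> ('v \<Rightarrow> 'd) set) \<Rightarrow> ('r,'v,'c) qclause set \<Rightarrow> 'v set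
                    \<Rightarrow> ('r,'v) atom \<Rightarrow> 'c list \<Rightarrow> 'c list \<Rightarrow> real \<Rightarrow> bool"
  for vars sol P V where
  unit: "\<lbrakk> ((r, ys), f, c, []) \<in> P; renaming \<rho>; map \<rho> ys = xs; cvariant vars sol \<rho> c c';
          (V \<union> cvars vars \<phi>) \<inter> vars c' \<subseteq> set xs;
          solV sol V \<psi> = solV sol V (c' # \<phi>); csol sol \<psi> \<noteq> {} \<rbrakk>
         \<Longrightarrow> ptree vars sol P V (r, xs) \<phi> \<psi> (f * 1)"
| step: "\<lbrakk> ((r, ys), f, c, B) \<in> P; B \<noteq> []; renaming \<rho>; map \<rho> ys = xs; cvariant vars sol \<rho> c c';
          B' = map (\<lambda>(q, zs). (q, map \<rho> zs)) B;
          (V \<union> cvars vars \<phi>) \<inter> (vars c' \<union> (\<Union>Bj\<in>set B'. avars Bj)) \<subseteq> set xs;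
          length \<phi>s = length B'; length leaves = length B'; length vals = length B';
          \<forall>j < length B'. solV sol (V \<union> avars (B' ! j)) (\<phi>s ! j)
                             = solV sol (V \<union> avars (B' ! j)) (c' # \<phi>);
          \<forall>j < length B'. ptree vars sol P V (B' ! j) (\<phi>s ! j) (leaves ! j) (vals ! j) \<rbrakk>
         \<Longrightarrow> ptree vars sol P V (r, xs) \<phi> (concat leaves) (f * minl vals)"

text \<open>A proof tree for the query \<open>r(x) & \<phi>\<close> with answer constraint \<open>\<psi>\<close> (the satisfiable
  constraint obtained by combining the terminal constraints by constraint solving, i.e.
  equivalent to their conjunction on the query variables \<open>V\<close>) and root value \<open>v\<close>.\<close>
definition has_proof_tree :: "('c \<Rightarrow> 'v set) \<Rightarrow> ('c \<Rightarrow> ('v \<Rightarrow> 'd) set) \<Rightarrow> ('r,'v,'c) qclause set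
                    \<Rightarrow> ('r,'v) atom \<Rightarrow> 'c \<Rightarrow> 'c list \<Rightarrow> real \<Rightarrow> bool" where
  "has_proof_tree vars sol P A \<phi> \<psi> v \<longleftrightarrow>
     (let V = avars A \<union> vars \<phi> in
      \<exists>leaves. ptree vars sol P V A [\<phi>] leaves v \<and>
               solV sol V \<psi> = solV sol V leaves \<and> csol sol \<psi> \<noteq> {})"

end

theory Submission
  imports Defs
begin


lemma minl_mono:
  assumes "length a = length b" "\<forall>i<length a. a!i \<le> b!i"
  shows "minl a \<le> minl b"
proof (cases "b = []")
  case True then show ?thesis using assms by (simp add: minl_def)
next
  case False
  then have "a \<noteq> []" using assms by auto
  obtain k where k: "k < length b" "b!k = Min (set b)"
    using False by (metis Min_in List.finite_set in_set_conv_nth set_empty)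
  have "Min (set a) \<le> a!k" using k assms by simp
  also have "\<dots> \<le> b!k" using k(1) assms by simp
  finally show ?thesis using False \<open>a \<noteq> []\<close> k by (simp add: minl_def)
qed

lemma minl_in: "xs \<noteq> [] \<Longrightarrow> minl xs \<in> set xs"
  by (simp add: minl_def)

lemma minl_le: "x \<in> set xs \<Longrightarrow> minl xs \<le> x"
  by (auto simp: minl_def)

lemma minl_pos: "\<forall>x\<in>set xs. 0 < x \<Longrightarrow> 0 < minl xs"
  by (cases "xs = []") (auto simp: minl_def)

lemma minl_le1: "\<forall>x\<in>set xs. x \<le> 1 \<Longrightarrow> minl xs \<le> 1"
  by (cases "xs = []") (auto simp: minl_def)

inductive gder :: "('c \<Rightarrow> ('v \<Rightarrow> 'd) set) \<Rightarrow> ('r,'v,'c) qclause set \<Rightarrow> 'r \<Rightarrow> 'd list \<Rightarrow> real \<Rightarrow> bool"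
  for sol P where
  "\<lbrakk> ((r, ys), f, c, B) \<in> P; \<alpha> \<in> sol c; map \<alpha> ys = ds; length vals = length B;
     \<forall>j<length B. gder sol P (fst (B!j)) (map \<alpha> (snd (B!j))) (vals!j) \<rbrakk>
   \<Longrightarrow> gder sol P r ds (f * minl vals)"

thm gder.induct

lemma gder_range:
  assumes "qspec P"
  shows "gder sol P r ds v \<Longrightarrow> 0 < v \<and> v \<le> 1"
proof (induction rule: gder.induct)
  case (1 r ys f c B \<alpha> ds vals)
  have f: "0 < f" "f \<le> 1" using 1(1) assms unfolding qspec_def by auto
  have "\<forall>x\<in>set vals. 0 < x \<and> x \<le> 1" using 1(4,5) by (auto simp: in_set_conv_nth)
  then have "0 < minl vals" "minl vals \<le> 1" using minl_pos minl_le1 by auto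
  then show ?case using f by (simp add: mult_le_one)
qed

lemma gder_sound:
  assumes "is_qmodel sol P \<mu>" "qspec P"
  shows "gder sol P r ds v \<Longrightarrow> v \<le> \<mu> r ds"
proof (induction rule: gder.induct)
  case (1 r ys f c B \<alpha> ds vals)
  have f: "0 \<le> f" using 1(1) assms(2) unfolding qspec_def by fastforce
  have "minl vals \<le> minl (map (\<lambda>(q, ys). \<mu> q (map \<alpha> ys)) B)"
    using 1(4,5) by (intro minl_mono) (auto simp: case_prod_beta)
  then have "f * minl vals \<le> f * minl (map (\<lambda>(q, ys). \<mu> q (map \<alpha> ys)) B)"
    using f by (simp add: mult_left_mono)
  also have "\<dots> \<le> \<mu> r (map \<alpha> ys)" using assms 1(1,2) unfolding is_qmodel_def by fastforce
  finally show ?case using 1(3) by simp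
qed

definition facs :: "('r,'v,'c) qclause set \<Rightarrow> real set" where
  "facs P = (\<lambda>(A,f,c,B). f) ` P"

lemma gder_prods:
  "gder sol P r ds v \<Longrightarrow> \<exists>l. set l \<subseteq> facs P \<and> v = prod_list l"
proof (induction rule: gder.induct)
  case (1 r ys f c B \<alpha> ds vals)
  have fin: "f \<in> facs P" using 1(1) unfolding facs_def by force
  show ?case
  proof (cases "vals = []")
    case True then show ?thesis using fin by (intro exI[of _ "[f]"]) (simp add: minl_def)
  next
    case False
    then obtain k where k: "k < length vals" "minl vals = vals!k"
      using minl_in by (metis in_set_conv_nth)
    then obtain l where "set l \<subseteq> facs P" "vals!k = prod_list l" using 1(4,5) by auto
    then show ?thesis using fin k by (intro exI[of _ "f#l"]) simp
  qed
qed

lemma prod_list_filter1: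
  "\<forall>f\<in>set l. f \<le> (1::real) \<Longrightarrow> prod_list (filter (\<lambda>f. f < 1) l) = prod_list l"
  by (induction l) auto

lemma prod_list_le_pow:
  "\<forall>f\<in>set l. 0 < f \<and> f \<le> (m::real) \<Longrightarrow> prod_list l \<le> m ^ length l"
proof (induction l)
  case Nil then show ?case by simp
next
  case (Cons a l)
  then have "0 \<le> prod_list l" by (simp add: prod_list_nonneg less_imp_le)
  then show ?case using Cons by (auto intro: mult_mono)
qed

lemma finite_prods_ge:
  fixes F :: "real set"
  assumes "finite F" "\<forall>f\<in>F. 0 < f \<and> f \<le> 1" "0 < e"
  shows "finite {x. \<exists>l. set l \<subseteq> F \<and> x = prod_list l \<and> e \<le> x}"
proof -
  define F1 where "F1 = {f\<in>F. f < 1}"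
  have fF1: "finite F1" using assms(1) by (simp add: F1_def)
  show ?thesis
  proof (cases "F1 = {}")
    case True
    have "{x. \<exists>l. set l \<subseteq> F \<and> x = prod_list l \<and> e \<le> x} \<subseteq> {1}"
    proof safe
      fix l assume "set l \<subseteq> F"
      then have "\<forall>f\<in>set l. f = 1" using True assms(2) unfolding F1_def by force
      then show "prod_list l = 1" by (induction l) auto
    qed
    then show ?thesis using finite_subset by blast
  next
    case False
    define m where "m = Max F1"
    have m: "m < 1" "0 < m" using False fF1 Max_in[OF fF1 False] assms(2) unfolding m_def F1_def by auto
    have mge: "\<forall>f\<in>F1. f \<le> m" using fF1 unfolding m_def by simp
    obtain K where K: "m ^ K < e" using real_arch_pow_inv[OF assms(3) m(1)] by blast
    have "{x. \<exists>l. set l \<subseteq> F \<and> x = prod_list l \<and> e \<le> x} \<subseteq>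
          prod_list ` {l. set l \<subseteq> F1 \<and> length l \<le> K}"
    proof safe
      fix l assume l: "set l \<subseteq> F" "e \<le> prod_list l"
      define l' where "l' = filter (\<lambda>f. f < 1) l"
      have eq: "prod_list l' = prod_list l" unfolding l'_def
        using l(1) assms(2) by (intro prod_list_filter1) blast
      have sl': "set l' \<subseteq> F1" using l(1) unfolding l'_def F1_def by auto
      have "length l' \<le> K"
      proof (rule ccontr)
        assume "\<not> length l' \<le> K"
        have "prod_list l' \<le> m ^ length l'"
          using sl' mge assms(2) unfolding F1_def by (intro prod_list_le_pow) blast
        also have "\<dots> \<le> m ^ K" using \<open>\<not> length l' \<le> K\<close> m by (intro power_decreasing) auto
        finally show False using K l(2) eq by simp
      qed
      then show "prod_list l \<in> prod_list ` {l. set l \<subseteq> F1 \<and> length l \<le> K}"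
        using sl' eq by (metis (mono_tags, lifting) image_eqI mem_Collect_eq)
    qed
    then show ?thesis using finite_lists_length_le[OF fF1] finite_subset by blast
  qed
qed

lemma gder_max:
  assumes "qspec P" "gder sol P r ds v0"
  shows "\<exists>m. gder sol P r ds m \<and> (\<forall>v. gder sol P r ds v \<longrightarrow> v \<le> m)"
proof -
  have fin: "finite (facs P)" using assms(1) unfolding qspec_def facs_def by auto
  have fr: "\<forall>f\<in>facs P. 0 < f \<and> f \<le> 1" using assms(1) unfolding qspec_def facs_def by fastforce
  have v0: "0 < v0" using gder_range[OF assms] by simp
  define T where "T = {v. gder sol P r ds v \<and> v0 \<le> v}"
  have "T \<subseteq> {x. \<exists>l. set l \<subseteq> facs P \<and> x = prod_list l \<and> v0 \<le> x}"
    unfolding T_def using gder_prods by fastforce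
  then have fT: "finite T" using finite_prods_ge[OF fin fr v0] finite_subset by blast
  have "v0 \<in> T" using assms(2) unfolding T_def by simp
  then have ne: "T \<noteq> {}" by blast
  have "Max T \<in> T" using Max_in[OF fT ne] .
  moreover have "\<forall>v. gder sol P r ds v \<longrightarrow> v \<le> Max T"
  proof safe
    fix v assume "gder sol P r ds v"
    show "v \<le> Max T"
    proof (cases "v0 \<le> v")
      case True then show ?thesis using \<open>gder sol P r ds v\<close> fT unfolding T_def by simp
    next
      case False then show ?thesis using Max_ge[OF fT \<open>v0 \<in> T\<close>] by simp
    qed
  qed
  ultimately show ?thesis unfolding T_def by blast
qed

definition gmu :: "('c \<Rightarrow> ('v \<Rightarrow> 'd) set) \<Rightarrow> ('r,'v,'c) qclause set \<Rightarrow> 'r \<Rightarrow> 'd list \<Rightarrow> real" where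
  "gmu sol P r ds = (if \<exists>v. gder sol P r ds v then Sup {v. gder sol P r ds v} else 0)"

lemma gmu_char:
  assumes "qspec P" "gder sol P r ds v0"
  shows "gder sol P r ds (gmu sol P r ds) \<and> (\<forall>v. gder sol P r ds v \<longrightarrow> v \<le> gmu sol P r ds)"
proof -
  obtain m where m: "gder sol P r ds m" "\<forall>v. gder sol P r ds v \<longrightarrow> v \<le> m"
    using gder_max[OF assms] by blast
  have "Sup {v. gder sol P r ds v} = m" using m by (intro cSup_eq_maximum) auto
  then have "gmu sol P r ds = m" using assms(2) unfolding gmu_def by auto
  then show ?thesis using m by simp
qed

lemma gmu_model:
  assumes "qspec P"
  shows "is_qmodel sol P (gmu sol P)"
  unfolding is_qmodel_def
proof safe
  fix r ds
  show "0 \<le> gmu sol P r ds" "gmu sol P r ds \<le> 1"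
  proof -
    have "0 \<le> gmu sol P r ds \<and> gmu sol P r ds \<le> 1"
    proof (cases "\<exists>v. gder sol P r ds v")
      case True
      then obtain v where "gder sol P r ds v" by blast
      then show ?thesis using gmu_char[OF assms] gder_range[OF assms] by fastforce
    next
      case False then show ?thesis unfolding gmu_def by auto
    qed
    then show "0 \<le> gmu sol P r ds" "gmu sol P r ds \<le> 1" by auto
  qed
next
  fix r xs f c B \<alpha>
  assume cl: "((r, xs), f, c, B) \<in> P" and a: "\<alpha> \<in> sol c"
  define bs where "bs = map (\<lambda>(q, ys). gmu sol P q (map \<alpha> ys)) B"
  have nn: "\<And>r ds. 0 \<le> gmu sol P r ds"
  proof -
    fix r ds show "0 \<le> gmu sol P r ds"
    proof (cases "\<exists>v. gder sol P r ds v")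
      case True
      then obtain v where "gder sol P r ds v" by blast
      then show ?thesis using gmu_char[OF assms] gder_range[OF assms] by fastforce
    next
      case False then show ?thesis unfolding gmu_def by auto
    qed
  qed
  show "f * minl (map (\<lambda>(q, ys). gmu sol P q (map \<alpha> ys)) B) \<le> gmu sol P r (map \<alpha> xs)"
  proof (cases "\<forall>j<length B. \<exists>v. gder sol P (fst (B!j)) (map \<alpha> (snd (B!j))) v")
    case True
    then have "\<forall>j<length B. gder sol P (fst (B!j)) (map \<alpha> (snd (B!j))) (bs!j)"
      unfolding bs_def using gmu_char[OF assms] by (auto simp: case_prod_beta) blast
    then have g: "gder sol P r (map \<alpha> xs) (f * minl bs)"
      using cl a by (intro gder.intros[of r xs f c B P \<alpha> sol]) (auto simp: bs_def)
    then show ?thesis using gmu_char[OF assms g] unfolding bs_def by blast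
  next
    case False
    then obtain j where j: "j < length B" "\<not> (\<exists>v. gder sol P (fst (B!j)) (map \<alpha> (snd (B!j))) v)"
      by blast
    then have "bs!j = 0" unfolding bs_def gmu_def by (auto simp add: case_prod_beta)
    then have "minl bs \<le> 0" using j(1) by (metis bs_def length_map minl_le nth_mem)
    moreover have "0 \<le> f" using cl assms unfolding qspec_def by fastforce
    ultimately have "f * minl bs \<le> 0" by (simp add: mult_nonneg_nonpos)
    then show ?thesis using nn unfolding bs_def by (meson order_trans)
  qed
qed

lemma gder_complete:
  assumes "qspec P" "minimal_qmodel sol P \<mu>" "0 < \<mu> r ds"
  shows "gder sol P r ds (\<mu> r ds)"
proof -
  have le: "\<mu> r ds \<le> gmu sol P r ds"
    using assms(2) gmu_model[OF assms(1)] unfolding minimal_qmodel_def by blast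
  have ex: "\<exists>v. gder sol P r ds v"
    using le assms(3) unfolding gmu_def by (auto split: if_splits)
  then obtain v where v: "gder sol P r ds v" by blast
  have g: "gder sol P r ds (gmu sol P r ds)" using gmu_char[OF assms(1) v] by blast
  have "gmu sol P r ds \<le> \<mu> r ds"
    using gder_sound[OF _ assms(1) g] assms(2) unfolding minimal_qmodel_def by blast
  then show ?thesis using le g by simp
qed



lemma extend_renaming:
  assumes "finite S" "inj_on h S"
  shows "\<exists>\<rho>. renaming \<rho> \<and> (\<forall>x\<in>S. \<rho> x = h x)"
proof -
  define T where "T = h ` S"
  have fT: "finite T" using assms by (simp add: T_def)
  have cT: "card T = card S" using assms card_image T_def by blast
  define A where "A = T - S"
  define B where "B = S - T"
  have "card A = card T - card (T \<inter> S)" unfolding A_def using fT by (simp add: card_Diff_subset_Int)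
  moreover have "card B = card S - card (S \<inter> T)" unfolding B_def using assms(1) by (simp add: card_Diff_subset_Int)
  ultimately have "card A = card B" using cT by (simp add: Int_commute)
  then obtain g where g: "bij_betw g A B"
    using finite_same_card_bij[of A B] fT assms(1) unfolding A_def B_def by auto
  define \<rho> where "\<rho> x = (if x \<in> S then h x else if x \<in> A then g x else x)" for x
  have b1: "bij_betw \<rho> S T" unfolding T_def
    using assms(2) by (simp add: bij_betw_def inj_on_def \<rho>_def image_def)
  have b2: "bij_betw \<rho> A B"
    using g unfolding \<rho>_def by (rule bij_betw_cong[THEN iffD1, rotated]) (auto simp: A_def)
  have b: "bij_betw \<rho> (S \<union> A) (T \<union> B)"
    using bij_betw_combine[OF b1 b2] by (simp add: B_def)
  have SA: "S \<union> A = S \<union> T" "T \<union> B = S \<union> T" unfolding A_def B_def by auto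
  have bST: "bij_betw \<rho> (S \<union> T) (S \<union> T)" using b SA by simp
  have out: "\<And>x. x \<notin> S \<union> T \<Longrightarrow> \<rho> x = x" unfolding \<rho>_def A_def by auto
  have "inj \<rho>"
  proof (rule injI)
    fix x y assume e: "\<rho> x = \<rho> y"
    show "x = y"
    proof (cases "x \<in> S \<union> T"; cases "y \<in> S \<union> T")
      assume "x \<in> S \<union> T" "y \<in> S \<union> T" then show ?thesis using e bST by (auto simp: bij_betw_def inj_on_def)
    next
      assume "x \<in> S \<union> T" "y \<notin> S \<union> T" then show ?thesis using e bST out[of y] by (auto simp: bij_betw_def)
    next
      assume "x \<notin> S \<union> T" "y \<in> S \<union> T" then show ?thesis using e bST out[of x] by (auto simp: bij_betw_def)
    next
      assume "x \<notin> S \<union> T" "y \<notin> S \<union> T" then show ?thesis using e out by auto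
    qed
  qed
  moreover have "surj \<rho>"
  proof -
    have "\<forall>y. y \<in> range \<rho>"
    proof
      fix y show "y \<in> range \<rho>"
      proof (cases "y \<in> S \<union> T")
        case True then show ?thesis using bST by (auto simp: bij_betw_def)
      next
        case False then show ?thesis using out[of y] by (metis rangeI)
      qed
    qed
    then show ?thesis by auto
  qed
  moreover have "{x. \<rho> x \<noteq> x} \<subseteq> S \<union> T" using out by blast
  then have "finite {x. \<rho> x \<noteq> x}" using fT assms(1) finite_subset by blast
  moreover have "\<forall>x\<in>S. \<rho> x = h x" unfolding \<rho>_def by simp
  ultimately show ?thesis unfolding renaming_def bij_def by blast
qed

lemma locality:
  assumes "constraint_language vars sol" "\<forall>x\<in>cvars vars cs. \<gamma> x = \<gamma>' x" "\<gamma> \<in> csol sol cs"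
  shows "\<gamma>' \<in> csol sol cs"
  using assms unfolding constraint_language_def csol_def cvars_def by blast

lemma locality1:
  assumes "constraint_language vars sol" "\<forall>x\<in>vars c. \<gamma> x = \<gamma>' x" "\<gamma> \<in> sol c"
  shows "\<gamma>' \<in> sol c"
  using assms unfolding constraint_language_def by blast

lemma seq_build:
  assumes CL: "constraint_language vars sol"
    and H: "\<forall>j<n. \<forall>U \<gamma>. U0 \<subseteq> U \<and> finite U \<and> (\<forall>x\<in>U0. \<gamma> x = \<gamma>0 x) \<longrightarrow>
           (\<exists>l W \<gamma>'. Q j l \<and> U \<subseteq> W \<and> finite W \<and> (\<forall>x\<in>U. \<gamma>' x = \<gamma> x) \<and> \<gamma>' \<in> csol sol l \<and> cvars vars l \<subseteq> W)"
    and fU0: "finite U0"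
  shows "\<exists>ls W \<gamma>'. length ls = n \<and> (\<forall>j<n. Q j (ls!j)) \<and> U0 \<subseteq> W \<and> finite W \<and>
           (\<forall>x\<in>U0. \<gamma>' x = \<gamma>0 x) \<and> \<gamma>' \<in> csol sol (concat ls) \<and> cvars vars (concat ls) \<subseteq> W"
  using H
proof (induction n)
  case 0 then show ?case using fU0 by (intro exI[of _ "[]"] exI[of _ U0] exI[of _ \<gamma>0]) (auto simp: csol_def cvars_def)
next
  case (Suc n)
  have "\<forall>j<n. \<forall>U \<gamma>. U0 \<subseteq> U \<and> finite U \<and> (\<forall>x\<in>U0. \<gamma> x = \<gamma>0 x) \<longrightarrow>
           (\<exists>l W \<gamma>'. Q j l \<and> U \<subseteq> W \<and> finite W \<and> (\<forall>x\<in>U. \<gamma>' x = \<gamma> x) \<and> \<gamma>' \<in> csol sol l \<and> cvars vars l \<subseteq> W)"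
    using Suc.prems by simp
  from Suc.IH[OF this] obtain ls W \<gamma>' where IH: "length ls = n" "\<forall>j<n. Q j (ls!j)" "U0 \<subseteq> W" "finite W"
           "\<forall>x\<in>U0. \<gamma>' x = \<gamma>0 x" "\<gamma>' \<in> csol sol (concat ls)" "cvars vars (concat ls) \<subseteq> W"
    by blast
  obtain l W' \<gamma>'' where N: "Q n l" "W \<subseteq> W'" "finite W'" "\<forall>x\<in>W. \<gamma>'' x = \<gamma>' x"
       "\<gamma>'' \<in> csol sol l" "cvars vars l \<subseteq> W'"
    using Suc.prems[rule_format, OF lessI, of W \<gamma>'] IH(3,4,5) by blast
  have "\<gamma>'' \<in> csol sol (concat ls)"
    using locality[OF CL _ IH(6), of \<gamma>''] IH(7) N(4) by (metis subsetD)
  then have "\<gamma>'' \<in> csol sol (concat (ls @ [l]))" using N(5) by (auto simp: csol_def)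
  moreover have "cvars vars (concat (ls @ [l])) \<subseteq> W'" using IH(7) N(2,6) by (auto simp: cvars_def)
  moreover have "\<forall>j<Suc n. Q j ((ls @ [l])!j)" using IH(1,2) N(1) by (auto simp: nth_append less_Suc_eq)
  ultimately show ?case using IH N by (intro exI[of _ "ls @ [l]"] exI[of _ W'] exI[of _ \<gamma>'']) auto
qed



lemma lift:
  assumes CL: "constraint_language vars sol" and CR: "closed_under_renaming vars sol"
    and Q: "qspec P"
  shows "gder sol P q ds val \<Longrightarrow> \<forall>xs \<phi> U \<gamma>. atom_wf (q, xs) \<and> finite U \<and> V \<union> cvars vars \<phi> \<union> set xs \<subseteq> U
      \<and> map \<gamma> xs = ds \<and> \<gamma> \<in> csol sol \<phi> \<longrightarrow>
      (\<exists>leaves W \<gamma>'. ptree vars sol P V (q, xs) \<phi> leaves val \<and> U \<subseteq> W \<and> finite W \<and>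
         (\<forall>x\<in>U. \<gamma>' x = \<gamma> x) \<and> \<gamma>' \<in> csol sol leaves \<and> cvars vars leaves \<subseteq> W)"
proof (induction rule: gder.induct)
  case (1 q ys f c B \<alpha> ds vals)
  show ?case
  proof (intro allI impI, elim conjE)
    fix xs \<phi> U \<gamma>
    assume wf: "atom_wf (q, xs)" and fU: "finite U" and sub: "V \<union> cvars vars \<phi> \<union> set xs \<subseteq> U"
      and mg: "map \<gamma> xs = ds" and gphi: "\<gamma> \<in> csol sol \<phi>"
    have cl: "atom_wf (q, ys)" "\<forall>Bj\<in>set B. atom_wf Bj" "0 < f" "f \<le> 1"
      using 1(1) Q unfolding qspec_def by fastforce+
    have len: "length ys = length xs" using 1(3) mg by (metis length_map)
    have dys: "distinct ys" and dxs: "distinct xs" using cl wf by (auto simp: atom_wf_def)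
    have fvars: "\<forall>c. finite (vars c)" using CL unfolding constraint_language_def by blast
    have infV: "infinite (UNIV :: 'b set)" using CL unfolding constraint_language_def by blast
    define CV where "CV = vars c \<union> (\<Union>Bj\<in>set B. set (snd Bj)) \<union> set ys"
    have fCV: "finite CV" unfolding CV_def using fvars by auto
    define D where "D = CV - set ys"
    have fD: "finite D" using fCV by (simp add: D_def)
    have "infinite (- U)" using fU infV by (metis Compl_eq_Diff_UNIV Diff_infinite_finite)
    then obtain F where F: "finite F" "card F = card D" "F \<subseteq> - U"
      using infinite_arbitrarily_large by blast
    then obtain g where g: "bij_betw g D F" using finite_same_card_bij[OF fD F(1)] by auto
    define h where "h x = (if x \<in> set ys then the (map_of (zip ys xs) x) else g x)" for x
    have hys: "\<And>i. i < length ys \<Longrightarrow> h (ys!i) = xs!i"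
      unfolding h_def using map_of_zip_nth[OF len dys] len by simp
    have hys': "\<And>y. y \<in> set ys \<Longrightarrow> h y \<in> set xs"
      using hys len by (metis in_set_conv_nth)
    have hD: "\<And>x. x \<in> CV \<Longrightarrow> x \<notin> set ys \<Longrightarrow> h x = g x \<and> g x \<in> F"
    proof -
      fix x assume "x \<in> CV" "x \<notin> set ys"
      then have "x \<in> D" unfolding D_def by blast
      then show "h x = g x \<and> g x \<in> F" using bij_betw_apply[OF g] \<open>x \<notin> set ys\<close> unfolding h_def by simp
    qed
    have hU: "\<And>x. x \<in> set ys \<Longrightarrow> h x \<in> U" using hys' sub by blast
    have "inj_on h CV"
    proof (rule inj_onI)
      fix x y assume x: "x \<in> CV" and y: "y \<in> CV" and e: "h x = h y"
      show "x = y"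
      proof (cases "x \<in> set ys")
        case xy: True
        show ?thesis
        proof (cases "y \<in> set ys")
          case True
          then obtain i k where ik: "i < length ys" "k < length ys" "x = ys!i" "y = ys!k"
            using xy by (metis in_set_conv_nth)
          have "xs!i = h x" using hys[OF ik(1)] ik(3) by simp
          moreover have "xs!k = h y" using hys[OF ik(2)] ik(4) by simp
          ultimately have "xs!i = xs!k" using e by simp
          then have "i = k" using ik(1,2) dxs len by (simp add: nth_eq_iff_index_eq)
          then show ?thesis using ik by simp
        next
          case False
          then have "h y \<in> F" using hD[OF y False] by simp
          moreover have "h x \<in> U" using hU xy by blast
          ultimately have False using e F(3) by (metis ComplD subsetD)
          then show ?thesis ..
        qed
      next
        case xn: False
        show ?thesis
        proof (cases "y \<in> set ys")
          case True
          then have "h y \<in> U" using hU by blast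
          moreover have "h x \<in> F" using hD[OF x xn] by simp
          ultimately have False using e F(3) by (metis ComplD subsetD)
          then show ?thesis ..
        next
          case False
          then have "g x = g y" using hD[OF x xn] hD[OF y False] e by simp
          moreover have "x \<in> D" "y \<in> D" using x y xn False unfolding D_def by auto
          ultimately show ?thesis using g unfolding bij_betw_def inj_on_def by blast
        qed
      qed
    qed
    then obtain \<rho> where \<rho>: "renaming \<rho>" "\<forall>x\<in>CV. \<rho> x = h x"
      using extend_renaming[OF fCV] by blast
    have injr: "inj \<rho>" using \<rho>(1) unfolding renaming_def bij_def by blast
    have mys: "map \<rho> ys = xs"
      using hys \<rho>(2) len unfolding CV_def by (auto intro: nth_equalityI)
    have rD: "\<forall>w\<in>D. \<rho> w = g w" using \<rho>(2) unfolding h_def D_def by auto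
    have "\<rho> ` D = g ` D" using rD by (simp add: image_def)
    then have rDF: "\<rho> ` D = F" using g unfolding bij_betw_def by simp
    have rCV: "\<rho> ` CV \<subseteq> set xs \<union> F"
    proof -
      have "CV = set ys \<union> D" unfolding D_def CV_def by auto
      then show ?thesis using rDF mys by auto
    qed
    obtain c' where c': "cvariant vars sol \<rho> c c'" using CR \<rho>(1) unfolding closed_under_renaming_def by blast
    define B' where "B' = map (\<lambda>(q, zs). (q, map \<rho> zs)) B"
    define \<gamma>1 where "\<gamma>1 z = (if z \<in> F then \<alpha> (inv_into D g z) else \<gamma> z)" for z
    have K: "\<forall>w\<in>CV. \<gamma>1 (\<rho> w) = \<alpha> w"
    proof
      fix w assume w: "w \<in> CV"
      show "\<gamma>1 (\<rho> w) = \<alpha> w"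
      proof (cases "w \<in> set ys")
        case True
        then obtain i where i: "i < length ys" "w = ys!i" by (metis in_set_conv_nth)
        have r: "\<rho> w = xs!i" using i mys by (metis nth_map)
        have "xs!i \<in> U" using i len sub by auto
        then have "xs!i \<notin> F" using F(3) by blast
        then have "\<gamma>1 (\<rho> w) = \<gamma> (xs!i)" unfolding \<gamma>1_def r by simp
        also have "\<dots> = ds!i" using mg i len by (metis nth_map)
        also have "\<dots> = \<alpha> w" using 1(3) i by (metis nth_map)
        finally show ?thesis .
      next
        case False
        then have wD: "w \<in> D" using w D_def by auto
        have r: "\<rho> w = g w" using rD wD by blast
        have "g w \<in> F" using g wD unfolding bij_betw_def by blast
        then have "\<gamma>1 (\<rho> w) = \<alpha> (inv_into D g (g w))" unfolding \<gamma>1_def r by simp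
        also have "\<dots> = \<alpha> w" using bij_betw_inv_into_left[OF g wD] by simp
        finally show ?thesis .
      qed
    qed
    have gU: "\<forall>x\<in>U. \<gamma>1 x = \<gamma> x" unfolding \<gamma>1_def using F(3) by auto
    have g1c': "\<gamma>1 \<in> sol c'"
    proof -
      have "\<gamma>1 \<circ> \<rho> \<in> sol c" using locality1[OF CL _ 1(2), of "\<gamma>1 \<circ> \<rho>"] K unfolding CV_def by auto
      then show ?thesis using c' unfolding cvariant_def by auto
    qed
    have "\<forall>x\<in>cvars vars \<phi>. \<gamma> x = \<gamma>1 x" using gU sub by auto
    then have g1phi: "\<gamma>1 \<in> csol sol \<phi>" using locality[OF CL _ gphi, of \<gamma>1] by blast
    have vc': "vars c' \<subseteq> set xs \<union> F" using c' rCV unfolding cvariant_def CV_def by auto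
    have vB': "\<forall>Bj\<in>set B'. avars Bj \<subseteq> set xs \<union> F"
      using rCV unfolding B'_def CV_def avars_def by (fastforce simp: image_subset_iff)
    have fresh: "(V \<union> cvars vars \<phi>) \<inter> (vars c' \<union> (\<Union>Bj\<in>set B'. avars Bj)) \<subseteq> set xs"
      using vc' vB' sub F(3) by blast
    define U0 where "U0 = U \<union> F"
    have fU0: "finite U0" using fU F(1) by (simp add: U0_def)
    have cv0: "cvars vars (c' # \<phi>) \<subseteq> U0" using vc' sub unfolding U0_def cvars_def by auto
    have g1full: "\<gamma>1 \<in> csol sol (c' # \<phi>)" using g1c' g1phi by (simp add: csol_def)
    show "\<exists>leaves W \<gamma>'. ptree vars sol P V (q, xs) \<phi> leaves (f * minl vals) \<and> U \<subseteq> W \<and> finite W \<and>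
         (\<forall>x\<in>U. \<gamma>' x = \<gamma> x) \<and> \<gamma>' \<in> csol sol leaves \<and> cvars vars leaves \<subseteq> W"
    proof (cases "B = []")
      case True
      then have "vals = []" using 1(4) by simp
      then have m1: "minl vals = 1" by (simp add: minl_def)
      have fr: "(V \<union> cvars vars \<phi>) \<inter> vars c' \<subseteq> set xs" using fresh by blast
      have "ptree vars sol P V (q, xs) \<phi> (c' # \<phi>) (f * 1)"
        using 1(1) True g1full by (intro ptree.unit[OF _ \<rho>(1) mys c' fr]) auto
      then show ?thesis using m1 gU fU0 cv0 g1full unfolding U0_def
        by (intro exI[of _ "c' # \<phi>"] exI[of _ U0] exI[of _ \<gamma>1]) (auto simp: U0_def)
    next
      case False
      let ?Q = "\<lambda>j l. ptree vars sol P V (B'!j) (c' # \<phi>) l (vals!j)"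
      have H: "\<forall>j<length B. \<forall>U' \<gamma>. U0 \<subseteq> U' \<and> finite U' \<and> (\<forall>x\<in>U0. \<gamma> x = \<gamma>1 x) \<longrightarrow>
           (\<exists>l W \<gamma>'. ?Q j l \<and> U' \<subseteq> W \<and> finite W \<and> (\<forall>x\<in>U'. \<gamma>' x = \<gamma> x) \<and> \<gamma>' \<in> csol sol l \<and> cvars vars l \<subseteq> W)"
      proof (intro allI impI, elim conjE)
        fix j U' \<gamma>' assume j: "j < length B" and U': "U0 \<subseteq> U'" "finite U'" and ag: "\<forall>x\<in>U0. \<gamma>' x = \<gamma>1 x"
        obtain qj zs where Bj: "B!j = (qj, zs)" by fastforce
        have B'j: "B'!j = (qj, map \<rho> zs)" using j Bj unfolding B'_def by simp
        have "(qj, zs) \<in> set B" using j Bj by (metis nth_mem)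
        then have zsCV: "set zs \<subseteq> CV" unfolding CV_def by force
        have wfj: "atom_wf (qj, map \<rho> zs)"
          using cl(2) j Bj injr by (metis atom_wf_def distinct_map inj_on_subset nth_mem snd_conv subset_UNIV)
        have "set (map \<rho> zs) \<subseteq> set xs \<union> F" using zsCV rCV by auto
        then have s1: "V \<union> cvars vars (c' # \<phi>) \<union> set (map \<rho> zs) \<subseteq> U'"
          using U' cv0 sub unfolding U0_def by (auto simp: image_subset_iff) blast
        have "\<forall>z\<in>set zs. \<gamma>' (\<rho> z) = \<alpha> z"
        proof
          fix z assume z: "z \<in> set zs"
          then have "\<rho> z \<in> set xs \<union> F" using zsCV rCV by blast
          then have "\<rho> z \<in> U0" using sub unfolding U0_def by blast
          then show "\<gamma>' (\<rho> z) = \<alpha> z" using ag K zsCV z by auto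
        qed
        then have s2: "map \<gamma>' (map \<rho> zs) = map \<alpha> (snd (B!j))" using Bj by simp
        have "\<forall>x\<in>cvars vars (c' # \<phi>). \<gamma>1 x = \<gamma>' x" using ag cv0 by auto
        then have s3: "\<gamma>' \<in> csol sol (c' # \<phi>)" using locality[OF CL _ g1full, of \<gamma>'] by blast
        have IHj: "\<forall>xs \<phi> U \<gamma>. atom_wf (fst (B!j), xs) \<and> finite U \<and> V \<union> cvars vars \<phi> \<union> set xs \<subseteq> U
            \<and> map \<gamma> xs = map \<alpha> (snd (B!j)) \<and> \<gamma> \<in> csol sol \<phi> \<longrightarrow>
            (\<exists>leaves W \<gamma>'. ptree vars sol P V (fst (B!j), xs) \<phi> leaves (vals!j) \<and> U \<subseteq> W \<and> finite W \<and>
               (\<forall>x\<in>U. \<gamma>' x = \<gamma> x) \<and> \<gamma>' \<in> csol sol leaves \<and> cvars vars leaves \<subseteq> W)"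
          using 1(5) j by blast
        show "\<exists>l W \<gamma>''. ?Q j l \<and> U' \<subseteq> W \<and> finite W \<and> (\<forall>x\<in>U'. \<gamma>'' x = \<gamma>' x) \<and> \<gamma>'' \<in> csol sol l \<and> cvars vars l \<subseteq> W"
          using IHj[rule_format, of "map \<rho> zs" U' "c' # \<phi>" \<gamma>'] wfj U'(2) s1 s2 s3 Bj B'j by simp
      qed
      obtain ls W \<gamma>' where S: "length ls = length B" "\<forall>j<length B. ?Q j (ls!j)" "U0 \<subseteq> W" "finite W"
           "\<forall>x\<in>U0. \<gamma>' x = \<gamma>1 x" "\<gamma>' \<in> csol sol (concat ls)" "cvars vars (concat ls) \<subseteq> W"
        using seq_build[OF CL H fU0] by blast
      have lB': "length B' = length B" by (simp add: B'_def)
      have "ptree vars sol P V (q, xs) \<phi> (concat ls) (f * minl vals)"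
        apply (rule ptree.step[OF 1(1) False \<rho>(1) mys c' B'_def fresh, of "replicate (length B) (c' # \<phi>)"])
            apply (simp_all only: lB' S(1) 1(4) length_replicate nth_replicate)
        using S(2) by auto
      then show ?thesis using S gU unfolding U0_def
        by (intro exI[of _ "concat ls"] exI[of _ W] exI[of _ \<gamma>']) auto
    qed
  qed
qed



theorem theorem3:
  fixes vars :: "'c \<Rightarrow> 'v set"
    and sol :: "'c \<Rightarrow> ('v \<Rightarrow> 'd) set"
    and P :: "('r,'v,'c) qclause set"
    and \<mu> :: "'r \<Rightarrow> 'd list \<Rightarrow> real"
    and r :: 'r and xs :: "'v list" and \<phi> :: 'c
    and \<alpha> :: "'v \<rightharpoonup> 'd" and \<beta> :: "'v \<Rightarrow> 'd" and v :: real
  assumes "constraint_language vars sol"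
    and "closed_under_renaming vars sol"
    and "qspec P"
    and "minimal_qmodel sol P \<mu>"
    and "atom_wf (r, xs)"
    and "\<alpha> \<in> solV sol (set xs \<union> vars \<phi>) [\<phi>]"
    and "\<mu> r (map \<beta> xs) = v"
    and "v > 0"
    and "\<alpha> = restr (set xs \<union> vars \<phi>) \<beta>"
  shows "\<exists>\<psi>. has_proof_tree vars sol P (r, xs) \<phi> \<psi> v \<and> \<alpha> \<in> solV sol (set xs \<union> vars \<phi>) \<psi>"
proof -
  define V where "V = set xs \<union> vars \<phi>"
  have fV: "finite V" using assms(1) unfolding V_def constraint_language_def by simp
  obtain \<delta> where d: "\<delta> \<in> csol sol [\<phi>]" "restr V \<delta> = \<alpha>"
    using assms(6) unfolding solV_def V_def by blast
  have agree: "\<forall>x\<in>V. \<delta> x = \<beta> x"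
  proof
    fix x assume "x \<in> V"
    then have "restr V \<delta> x = Some (\<delta> x)" "restr V \<beta> x = Some (\<beta> x)" by (simp_all add: restr_def)
    then show "\<delta> x = \<beta> x" using d(2) assms(9) unfolding V_def by simp
  qed
  have mx: "map \<delta> xs = map \<beta> xs" using agree unfolding V_def by simp
  have gd: "gder sol P r (map \<beta> xs) v"
    using gder_complete[OF assms(3,4), of r "map \<beta> xs"] assms(7,8) by simp
  have sub: "V \<union> cvars vars [\<phi>] \<union> set xs \<subseteq> V" unfolding V_def cvars_def by auto
  obtain leaves W \<gamma>' where L: "ptree vars sol P V (r, xs) [\<phi>] leaves v" "V \<subseteq> W"
      "\<forall>x\<in>V. \<gamma>' x = \<delta> x" "\<gamma>' \<in> csol sol leaves"
    using lift[OF assms(1,2,3) gd, of V, rule_format, of xs V "[\<phi>]" \<delta>] assms(5) fV sub mx d(1) by blast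
  have "restr V \<gamma>' = restr V \<delta>" using L(3) unfolding restr_def by (auto simp: restrict_map_def fun_eq_iff)
  then have a: "\<alpha> \<in> solV sol V leaves" using L(4) d(2) unfolding solV_def by (metis image_eqI)
  have "has_proof_tree vars sol P (r, xs) \<phi> leaves v"
    unfolding has_proof_tree_def Let_def using L(1,4) by (auto simp: avars_def V_def)
  then show ?thesis using a unfolding V_def by blast
qed


end
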